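(* Let $p,q\ge2$ and $n\ge1$. If $A\in\Omega_1(p,n)$ and $B\in\Omega_1(q,n)$, then $A\times B\in\Omega_1(p+q-2,n)$.
   Context: Let $I_n=\{1,\dots,n\}$. A $d$-dimensional matrix of order $n$ is a function $I_n^d\to\mathbb R$; write $a_{i_1\cdots i_d}=A(i_1,\dots,i_d)$. A line is the set of positions obtained by varying one coordinate and fixing the others. $\Omega_1(d,n)$ is the set of non-negative $d$-dimensional matrices of order $n$ whose entries in every line sum to $1$. For a $p$-dimensional $A$ and a $q$-dimensional $B$ of order $n$, the product $A\times B$ is the $(p+q-2)$-dimensional matrix of order $n$ with $(A\times B)_{i_1\cdots i_{p+q-2}}=\sum_{j=1}^n a_{i_1\cdots i_{p-1}j}\,b_{j i_p\cdots i_{p+q-2}}$. *)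

theory Defs
  imports Complex_Main
begin

text \<open>A d-dimensional matrix of order n is modelled as a function on index lists;
  only its values on index lists of length d with entries in {1..n} matter.\<close>

definition mindices :: "nat \<Rightarrow> nat \<Rightarrow> nat list set" where
  "mindices d n = {xs. length xs = d \<and> set xs \<subseteq> {1..n}}"

definition Omega1 :: "nat \<Rightarrow> nat \<Rightarrow> (nat list \<Rightarrow> real) set" where
  "Omega1 d n = {A. (\<forall>xs\<in>mindices d n. 0 \<le> A xs) \<and>
     (\<forall>xs\<in>mindices d n. \<forall>k<d. (\<Sum>j=1..n. A (xs[k := j])) = 1)}"

definition mprod :: "nat \<Rightarrow> nat \<Rightarrow> (nat list \<Rightarrow> real) \<Rightarrow> (nat list \<Rightarrow> real) \<Rightarrow> (nat list \<Rightarrow> real)" where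
  "mprod p n A B = (\<lambda>is. \<Sum>j=1..n. A (take (p - 1) is @ [j]) * B (j # drop (p - 1) is))"

end

theory Submission
  imports Defs
begin

lemma set_update_sub: "set xs \<subseteq> S \<Longrightarrow> x \<in> S \<Longrightarrow> set (xs[k:=x]) \<subseteq> S"
  by (meson order.trans set_update_subset_insert insert_subset)

theorem lemma3p4:
  fixes p q n :: nat and A B :: "nat list \<Rightarrow> real"
  assumes "p \<ge> 2" and "q \<ge> 2" and "n \<ge> 1"
    and "A \<in> Omega1 p n" and "B \<in> Omega1 q n"
  shows "mprod p n A B \<in> Omega1 (p + q - 2) n"
proof -
  have Anon: "\<And>xs. xs \<in> mindices p n \<Longrightarrow> 0 \<le> A xs"
    and Aline: "\<And>xs k. xs \<in> mindices p n \<Longrightarrow> k < p \<Longrightarrow> (\<Sum>j=1..n. A (xs[k := j])) = 1"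
    using assms(4) unfolding Omega1_def by auto
  have Bnon: "\<And>xs. xs \<in> mindices q n \<Longrightarrow> 0 \<le> B xs"
    and Bline: "\<And>xs k. xs \<in> mindices q n \<Longrightarrow> k < q \<Longrightarrow> (\<Sum>j=1..n. B (xs[k := j])) = 1"
    using assms(5) unfolding Omega1_def by auto
  have memA: "take (p - 1) xs @ [j] \<in> mindices p n"
    if "xs \<in> mindices (p + q - 2) n" "j \<in> {1..n}" for xs j
    using that assms(1,2) unfolding mindices_def
    by (auto dest: in_set_takeD)
  have memB: "j # drop (p - 1) xs \<in> mindices q n"
    if "xs \<in> mindices (p + q - 2) n" "j \<in> {1..n}" for xs j
    using that assms(1,2) unfolding mindices_def
    by (auto dest: in_set_dropD)
  have upd: "xs[k := i] \<in> mindices (p + q - 2) n"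
    if "xs \<in> mindices (p + q - 2) n" "i \<in> {1..n}" for xs i k
    using that set_update_sub[of xs "{1..n}" i k] unfolding mindices_def by simp
  show ?thesis
    unfolding Omega1_def
  proof (intro CollectI conjI ballI allI impI)
    fix xs assume xs: "xs \<in> mindices (p + q - 2) n"
    show "0 \<le> mprod p n A B xs"
      unfolding mprod_def
      by (intro sum_nonneg mult_nonneg_nonneg Anon Bnon memA memB xs)
  next
    fix xs k assume xs: "xs \<in> mindices (p + q - 2) n" and k: "k < p + q - 2"
    have len: "length xs = p + q - 2" using xs unfolding mindices_def by auto
    have one: "1 \<in> {1..n}" using assms(3) by auto
    show "(\<Sum>i=1..n. mprod p n A B (xs[k := i])) = 1"
    proof (cases "k < p - 1")
      case True
      have "(\<Sum>i=1..n. mprod p n A B (xs[k := i]))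
          = (\<Sum>i=1..n. \<Sum>j=1..n. A ((take (p - 1) xs @ [j])[k := i]) * B (j # drop (p - 1) xs))"
      proof (intro sum.cong refl)
        fix i
        have e1: "take (p - 1) (xs[k := i]) @ [j] = (take (p - 1) xs @ [j])[k := i]" for j
        proof -
          have "length (take (p - 1) xs) = p - 1" using len assms(2) by simp
          then show ?thesis using True by (simp add: take_update_swap list_update_append)
        qed
        have e2: "drop (p - 1) (xs[k := i]) = drop (p - 1) xs"
          using True by simp
        show "mprod p n A B (xs[k := i]) = (\<Sum>j=1..n. A ((take (p - 1) xs @ [j])[k := i]) * B (j # drop (p - 1) xs))"
          unfolding mprod_def e2 e1 ..
      qed
      also have "\<dots> = (\<Sum>j=1..n. (\<Sum>i=1..n. A ((take (p - 1) xs @ [j])[k := i])) * B (j # drop (p - 1) xs))"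
        by (subst sum.swap) (simp add: sum_distrib_right)
      also have "\<dots> = (\<Sum>j=1..n. B ((1 # drop (p - 1) xs)[0 := j]))"
      proof (intro sum.cong refl)
        fix j assume j: "j \<in> {1..n}"
        have "(\<Sum>i=1..n. A ((take (p - 1) xs @ [j])[k := i])) = 1"
          by (rule Aline[OF memA[OF xs j]]) (use True in simp)
        then show "(\<Sum>i=1..n. A ((take (p - 1) xs @ [j])[k := i])) * B (j # drop (p - 1) xs) = B ((1 # drop (p - 1) xs)[0 := j])"
          by simp
      qed
      also have "\<dots> = 1"
        using Bline[OF memB[OF xs one], of 0] assms(2) by simp
      finally show ?thesis .
    next
      case False
      have "(\<Sum>i=1..n. mprod p n A B (xs[k := i]))
          = (\<Sum>i=1..n. \<Sum>j=1..n. A (take (p - 1) xs @ [j]) * B ((j # drop (p - 1) xs)[Suc (k - (p - 1)) := i]))"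
        unfolding mprod_def using False len
        by (intro sum.cong refl) (simp add: drop_update_swap)
      also have "\<dots> = (\<Sum>j=1..n. A (take (p - 1) xs @ [j]) * (\<Sum>i=1..n. B ((j # drop (p - 1) xs)[Suc (k - (p - 1)) := i])))"
        by (subst sum.swap) (simp add: sum_distrib_left)
      also have "\<dots> = (\<Sum>j=1..n. A ((take (p - 1) xs @ [1])[p - 1 := j]))"
      proof (intro sum.cong refl)
        fix j assume j: "j \<in> {1..n}"
        have "(\<Sum>i=1..n. B ((j # drop (p - 1) xs)[Suc (k - (p - 1)) := i])) = 1"
          by (rule Bline[OF memB[OF xs j]]) (use False k assms(1) in simp)
        moreover have "(take (p - 1) xs @ [1])[p - 1 := j] = take (p - 1) xs @ [j]"
          using len assms(2) by (simp add: list_update_append)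
        ultimately show "A (take (p - 1) xs @ [j]) * (\<Sum>i=1..n. B ((j # drop (p - 1) xs)[Suc (k - (p - 1)) := i])) = A ((take (p - 1) xs @ [1])[p - 1 := j])"
          by simp
      qed
      also have "\<dots> = 1"
        using Aline[OF memA[OF xs one], of "p - 1"] assms(1) by simp
      finally show ?thesis .
    qed
  qed
qed

end
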